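(* Let $X,Y$ be strings of length $n$, let $T$ be a partition tree for $X$ and $Y$, and let $L\ge0$ be an integer. Suppose that $T$ has maximum degree $\ell$ and height at most $h$. Then (a) $\mathrm{TD}^L(X,Y)\ge\mathrm{ED}(X,Y)$, and (b) if $\mathrm{ED}(X,Y)\le L$, then $\mathrm{TD}^L(X,Y)\le(2(\ell-1)h+1)\,\mathrm{ED}(X,Y)$.
   Context: $\mathrm{ED}$ is edit distance. For a string $Z$ and integers $i,j$, $Z[i..j)$ denotes $Z[\max(0,i)]\cdots Z[\min(j,|Z|)-1]$ (indices out of range are clipped). A partition tree for length-$n$ strings $X,Y$ is a rooted ordered tree (balanced, each internal node having at most $\ell$ children) with $n$ leaves numbered $0,\dots,n-1$ from left to right; the height is the maximum distance from the root to a leaf. For a node $v$ whose subtree contains exactly the leaves $i,\dots,j-1$, set $X_v=X[i..j)$ and, for a shift $s\in\mathbb Z$, $Y_{v,s}=Y[i+s..j+s)$. For every node $v$ and $s\in\{-L,\dots,L\}$ define recursively: if $v$ is a leaf, $\mathrm{TD}^L_{v,s}(X,Y)=\mathrm{ED}(X_v,Y_{v,s})$; if $v$ has children $v_0,\dots,v_{m-1}$, then $\mathrm{TD}^L_{v,s}(X,Y)=\sum_{i=0}^{m-1}\widetilde{\mathrm{TD}}^L_{v_i,s}(X,Y)$, where $\widetilde{\mathrm{TD}}^L_{w,s}(X,Y)=\min_{s'\in\{-L,\dots,L\}}\big(\mathrm{TD}^L_{w,s'}(X,Y)+2|s-s'|\big)$. Finally $\mathrm{TD}^L(X,Y):=\mathrm{TD}^L_{\mathrm{root},0}(X,Y)$.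 *)

theory Defs
  imports Main
begin

fun ED :: "'a list \<Rightarrow> 'a list \<Rightarrow> nat" where
  "ED [] ys = length ys"
| "ED xs [] = length xs"
| "ED (x # xs) (y # ys) =
     min (min (ED xs (y # ys) + 1) (ED (x # xs) ys + 1))
         (ED xs ys + (if x = y then 0 else 1))"

(* Z[i..j) with clipping of out-of-range indices *)
definition substr :: "'a list \<Rightarrow> int \<Rightarrow> int \<Rightarrow> 'a list" where
  "substr Z i j = take (nat (min j (int (length Z)) - max 0 i)) (drop (nat (max 0 i)) Z)"

(* rooted ordered trees; leaves are numbered left to right implicitly *)
datatype ptree = Leaf | Node "ptree list"

fun nleaves :: "ptree \<Rightarrow> nat" where
  "nleaves Leaf = 1"
| "nleaves (Node ts) = sum_list (map nleaves ts)"

fun height :: "ptree \<Rightarrow> nat" where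
  "height Leaf = 0"
| "height (Node ts) = 1 + fold max (map height ts) 0"

fun degree_le :: "nat \<Rightarrow> ptree \<Rightarrow> bool" where
  "degree_le l Leaf = True"
| "degree_le l (Node ts) = (ts \<noteq> [] \<and> length ts \<le> l \<and> (\<forall>t\<in>set ts. degree_le l t))"

fun wf_ptree :: "ptree \<Rightarrow> bool" where
  "wf_ptree Leaf = True"
| "wf_ptree (Node ts) = (ts \<noteq> [] \<and> (\<forall>t\<in>set ts. wf_ptree t))"

definition partition_tree :: "nat \<Rightarrow> ptree \<Rightarrow> bool" where
  "partition_tree n T \<longleftrightarrow> wf_ptree T \<and> nleaves T = n"

(* TD_node L X Y v i s = TD^L_{v,s}(X,Y), where v's leaves are numbered i, i+1, ...;
   TD_list handles the children list of a node, the first child starting at leaf i *)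
fun TD_node :: "int \<Rightarrow> 'a list \<Rightarrow> 'a list \<Rightarrow> ptree \<Rightarrow> int \<Rightarrow> int \<Rightarrow> nat"
and TD_list :: "int \<Rightarrow> 'a list \<Rightarrow> 'a list \<Rightarrow> ptree list \<Rightarrow> int \<Rightarrow> int \<Rightarrow> nat" where
  "TD_node L X Y Leaf i = (\<lambda>s. ED (substr X i (i + 1)) (substr Y (i + s) (i + 1 + s)))"
| "TD_node L X Y (Node ts) i = TD_list L X Y ts i"
| "TD_list L X Y [] i = (\<lambda>s. 0)"
| "TD_list L X Y (t # ts) i =
     (let f = TD_node L X Y t i; g = TD_list L X Y ts (i + int (nleaves t)) in
      (\<lambda>s. (MIN s'\<in>{-L..L}. f s' + 2 * nat \<bar>s - s'\<bar>) + g s))"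

definition TD :: "int \<Rightarrow> ptree \<Rightarrow> 'a list \<Rightarrow> 'a list \<Rightarrow> nat" where
  "TD L T X Y = TD_node L X Y T 0 0"

end

theory Submission
  imports Defs
begin


lemma ED_Nil2[simp]: "ED xs [] = length xs"
  by (cases xs) auto

lemma ED_lb: "length xs \<le> ED xs ys + length ys" "length ys \<le> ED xs ys + length xs"
  by (induction xs ys rule: ED.induct) auto

lemma ED_cons1: "ED (x#xs) ys \<le> ED xs ys + 1"
  by (cases ys) auto

lemma ED_cons2: "ED xs (y#ys) \<le> ED xs ys + 1"
  by (cases xs) auto

lemma ED_del2: "ED xs ys \<le> ED xs (y#ys) + 1"
proof (induction xs ys rule: ED.induct)
  case (1 ys) then show ?case by simp
next
  case (2 v va) then show ?case using ED_lb(1)[of "v#va" "[y]"] by simp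
next
  case (3 x xs w ws)
  have "ED (x#xs) (w#ws) \<le> ED xs (w#ws) + 1" by (rule ED_cons1)
  moreover have "ED (x#xs) (w#ws) \<le> ED xs ws + (if x = w then 0 else 1) + 1"
    by simp
  ultimately show ?case using 3 by (auto simp: min_def split: if_splits)
qed

lemma ED_app_left: "ED b (c@d) \<le> length c + ED b d"
proof (induction c)
  case (Cons a c) then show ?case using ED_cons2[of b a "c@d"] by simp
qed simp

lemma ED_app_left1: "ED (a@b) d \<le> length a + ED b d"
proof (induction a)
  case (Cons x a) then show ?case using ED_cons1[of x "a@b" d] by simp
qed simp

lemma ED_append: "ED (a@b) (c@d) \<le> ED a c + ED b d"
proof (induction a c rule: ED.induct)
  case (1 ys) then show ?case using ED_app_left[of b ys d] by simp
next
  case (2 v va) then show ?case using ED_app_left1[of "v#va" b d] by simp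
next
  case (3 x xs y ys)
  then show ?case by (auto simp: min_def)
qed

lemma ED_snoc2: "ED xs (ys@[y]) \<le> ED xs ys + 1"
  using ED_append[of xs "[]" ys "[y]"] by simp

lemma ED_delsnoc2: "ED xs ys \<le> ED xs (ys@[y]) + 1"
proof (induction xs ys rule: ED.induct)
  case (1 ys) then show ?case by simp
next
  case (2 v va) then show ?case using ED_lb(1)[of "v#va" "[y]"] by simp
next
  case (3 x xs w ws)
  have "ED (x#xs) (w#ws) \<le> ED xs (w#ws) + 1" by (rule ED_cons1)
  moreover have "ED (x#xs) (w#ws) \<le> ED (x#xs) ws + 1" by (rule ED_cons2)
  moreover have "ED (x#xs) (w#ws) \<le> ED xs ws + (if x = w then 0 else 1)"
    by simp
  ultimately show ?case using 3 by (auto simp: min_def split: if_splits)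
qed

definition clamp :: "nat \<Rightarrow> int \<Rightarrow> nat" where
  "clamp n a = nat (max 0 (min a (int n)))"

lemma substr_alt: "substr Z a b = map (nth Z) [clamp (length Z) a..<clamp (length Z) b]"
proof (cases "a \<ge> int (length Z)")
  case True
  then show ?thesis by (auto simp: substr_def clamp_def)
next
  case False
  note aF = False
  define p where "p = nat (max 0 a)"
  have p: "p \<le> length Z" using False by (auto simp: p_def)
  have dz: "drop p Z = map (nth Z) [p..<length Z]"
    by (metis drop_map drop_upt map_nth add_0)
  show ?thesis
  proof (cases "min b (int (length Z)) \<ge> max 0 a")
    case True
    have "substr Z a b = map (nth Z) (take (nat (min b (int (length Z)) - max 0 a)) [p..<length Z])"
      by (simp add: substr_def dz take_map flip: p_def)
    also have "take (nat (min b (int (length Z)) - max 0 a)) [p..<length Z]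
        = [p..<p + nat (min b (int (length Z)) - max 0 a)]"
      by (rule take_upt) (use True in \<open>auto simp: p_def\<close>)
    also have "p + nat (min b (int (length Z)) - max 0 a) = clamp (length Z) b"
      using True by (auto simp: p_def clamp_def)
    also have "p = clamp (length Z) a" using False by (auto simp: p_def clamp_def)
    finally show ?thesis .
  next
    case False
    then show ?thesis using aF by (auto simp: substr_def clamp_def)
  qed
qed

lemma W_stepP: "\<bar>int (ED u (map (nth Y) [Suc P..<Q])) - int (ED u (map (nth Y) [P..<Q]))\<bar> \<le> 1"
proof (cases "P < Q")
  case True
  then have "[P..<Q] = P # [Suc P..<Q]" by (simp add: upt_conv_Cons)
  then show ?thesis
    using ED_cons2[of u "Y!P" "map (nth Y) [Suc P..<Q]"] ED_del2[of u "map (nth Y) [Suc P..<Q]" "Y!P"]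
    by simp
qed simp

lemma W_stepQ: "\<bar>int (ED u (map (nth Y) [P..<Suc Q])) - int (ED u (map (nth Y) [P..<Q]))\<bar> \<le> 1"
proof (cases "P \<le> Q")
  case True
  then have "[P..<Suc Q] = [P..<Q] @ [Q]" by simp
  then show ?thesis
    using ED_snoc2[of u "map (nth Y) [P..<Q]" "Y!Q"] ED_delsnoc2[of u "map (nth Y) [P..<Q]" "Y!Q"]
    by simp
qed simp

lemma W_P: "P \<le> P' \<Longrightarrow> \<bar>int (ED u (map (nth Y) [P'..<Q])) - int (ED u (map (nth Y) [P..<Q]))\<bar> \<le> int (P' - P)"
proof (induction P' rule: dec_induct)
  case (step m)
  then show ?case using W_stepP[of u Y m Q] by (simp add: Suc_diff_le)
qed simp

lemma W_Q: "Q \<le> Q' \<Longrightarrow> \<bar>int (ED u (map (nth Y) [P..<Q'])) - int (ED u (map (nth Y) [P..<Q]))\<bar> \<le> int (Q' - Q)"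
proof (induction Q' rule: dec_induct)
  case (step m)
  then show ?case using W_stepQ[of u Y P m] by (simp add: Suc_diff_le)
qed simp

lemma W_PQ: "\<bar>int (ED u (map (nth Y) [P'..<Q'])) - int (ED u (map (nth Y) [P..<Q]))\<bar>
   \<le> \<bar>int P' - int P\<bar> + \<bar>int Q' - int Q\<bar>"
proof -
  have a: "\<bar>int (ED u (map (nth Y) [P'..<Q])) - int (ED u (map (nth Y) [P..<Q]))\<bar> \<le> \<bar>int P' - int P\<bar>"
    using W_P[of P P' u Y Q] W_P[of P' P u Y Q] by (cases "P \<le> P'") auto
  have b: "\<bar>int (ED u (map (nth Y) [P'..<Q'])) - int (ED u (map (nth Y) [P'..<Q]))\<bar> \<le> \<bar>int Q' - int Q\<bar>"
    using W_Q[of Q Q' u Y P'] W_Q[of Q' Q u Y P'] by (cases "Q \<le> Q'") auto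
  show ?thesis using a b by linarith
qed

lemma clamp_lip: "\<bar>int (clamp n a) - int (clamp n b)\<bar> \<le> \<bar>a - b\<bar>"
  by (auto simp: clamp_def)

lemma ED_shift: "ED u (substr Y (a+s) (b+s)) \<le> ED u (substr Y (a+s') (b+s')) + 2 * nat \<bar>s - s'\<bar>"
proof -
  have "\<bar>int (ED u (substr Y (a+s) (b+s))) - int (ED u (substr Y (a+s') (b+s')))\<bar>
     \<le> \<bar>a + s - (a + s')\<bar> + \<bar>b + s - (b + s')\<bar>"
    unfolding substr_alt using W_PQ[of u Y] clamp_lip[of "length Y"] by (meson add_mono order_trans)
  moreover have "int (2 * nat \<bar>s - s'\<bar>) = 2 * \<bar>s - s'\<bar>" by simp
  ultimately have "int (ED u (substr Y (a+s) (b+s))) \<le> int (ED u (substr Y (a+s') (b+s')) + 2 * nat \<bar>s - s'\<bar>)"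
    by (simp only: of_nat_add)
  then show ?thesis by (simp only: of_nat_le_iff)
qed

lemma substr_split: "a \<le> b \<Longrightarrow> b \<le> c \<Longrightarrow> substr Z a b @ substr Z b c = substr Z a c"
proof -
  assume "a \<le> b" "b \<le> c"
  then have m: "clamp (length Z) a \<le> clamp (length Z) b" "clamp (length Z) b \<le> clamp (length Z) c"
    by (auto simp: clamp_def)
  have "[clamp (length Z) a..<clamp (length Z) b] @ [clamp (length Z) b..<clamp (length Z) c]
      = [clamp (length Z) a..<clamp (length Z) c]"
    using upt_add_eq_append[OF m(1), of "clamp (length Z) c - clamp (length Z) b"] m by simp
  then show ?thesis unfolding substr_alt by (metis map_append)
qed

lemma substr_empty[simp]: "substr Z a a = []"
  by (simp add: substr_alt)

lemma substr_full: "substr Z 0 (int (length Z)) = Z"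
  by (simp add: substr_alt clamp_def map_nth)

lemma substr_one: "0 \<le> a \<Longrightarrow> substr Z a (a+1) = (if nat a < length Z then [Z ! nat a] else [])"
  by (auto simp: substr_alt clamp_def nat_add_distrib)

lemma TD_lower:
  assumes "0 \<le> L"
  shows "\<forall>s. ED (substr X i (i + int (nleaves t))) (substr Y (i+s) (i + int (nleaves t) + s)) \<le> TD_node L X Y t i s"
    and "\<forall>s. ED (substr X i (i + int (sum_list (map nleaves ts)))) (substr Y (i+s) (i + int (sum_list (map nleaves ts)) + s)) \<le> TD_list L X Y ts i s"
  using assms
proof (induction L X Y t i and L X Y ts i rule: TD_node_TD_list.induct)
  case (1 L X Y i)
  then show ?case by (simp add: add_ac)
next
  case (2 L X Y ts i)
  then show ?case by simp
next
  case (3 L X Y i)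
  then show ?case by simp
next
  case (4 L X Y t ts i)
  have IH1: "\<And>s. ED (substr X i (i + int (nleaves t))) (substr Y (i+s) (i + int (nleaves t) + s)) \<le> TD_node L X Y t i s"
    using 4 by blast
  have IH2: "\<And>s. ED (substr X (i + int (nleaves t)) (i + int (nleaves t) + int (sum_list (map nleaves ts))))
     (substr Y (i + int (nleaves t) + s) (i + int (nleaves t) + int (sum_list (map nleaves ts)) + s)) \<le> TD_list L X Y ts (i + int (nleaves t)) s"
    using 4 by blast
  show ?case
  proof
    fix s
    define m where "m = int (nleaves t)"
    define M where "M = int (sum_list (map nleaves ts))"
    have m0: "0 \<le> m" "0 \<le> M" by (auto simp: m_def M_def)
    have nl: "int (sum_list (map nleaves (t # ts))) = m + M" by (simp add: m_def M_def)
    have sx: "substr X i (i + (m + M)) = substr X i (i+m) @ substr X (i+m) (i+m+M)"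
      using substr_split[of i "i+m" "i+m+M" X] m0 by (simp add: add_ac)
    have sy: "substr Y (i+s) (i + (m + M) + s) = substr Y (i+s) (i+m+s) @ substr Y (i+m+s) (i+m+M+s)"
      using substr_split[of "i+s" "i+m+s" "i+m+M+s" Y] m0 by (simp add: add_ac)
    define g where "g = (\<lambda>s'. TD_node L X Y t i s' + 2 * nat \<bar>s - s'\<bar>)"
    have "Min (g ` {-L..L}) \<in> g ` {-L..L}"
      by (rule Min_in) (use 4 in auto)
    then obtain s' where s': "Min (g ` {-L..L}) = g s'" by auto
    have "ED (substr X i (i+m)) (substr Y (i+s) (i+m+s))
        \<le> ED (substr X i (i+m)) (substr Y (i+s') (i+m+s')) + 2 * nat \<bar>s - s'\<bar>"
      using ED_shift[of "substr X i (i+m)" Y i s "i+m" s'] by (simp add: add_ac)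
    also have "\<dots> \<le> g s'" using IH1[of s'] by (simp add: g_def m_def)
    finally have t1: "ED (substr X i (i+m)) (substr Y (i+s) (i+m+s)) \<le> Min (g ` {-L..L})"
      using s' by simp
    have t2: "ED (substr X (i+m) (i+m+M)) (substr Y (i+m+s) (i+m+M+s)) \<le> TD_list L X Y ts (i + m) s"
      using IH2[of s] by (simp add: m_def M_def)
    have "ED (substr X i (i + (m + M))) (substr Y (i+s) (i + (m + M) + s))
       \<le> Min (g ` {-L..L}) + TD_list L X Y ts (i + m) s"
      unfolding sx sy using ED_append t1 t2 by (meson add_mono order_trans)
    then show "ED (substr X i (i + int (sum_list (map nleaves (t # ts)))))
          (substr Y (i + s) (i + int (sum_list (map nleaves (t # ts))) + s)) \<le> TD_list L X Y (t # ts) i s"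
      unfolding nl by (simp add: g_def m_def Let_def)
  qed
qed



definition good_align :: "'a list \<Rightarrow> 'a list \<Rightarrow> nat \<Rightarrow> (nat \<Rightarrow> int) \<Rightarrow> (nat \<Rightarrow> nat) \<Rightarrow> bool" where
  "good_align X Y k A c \<longleftrightarrow> A 0 = 0 \<and> (\<forall>i. 0 \<le> A i) \<and> sum c {..<length X} \<le> k
     \<and> (\<forall>i<length X. \<bar>A (Suc i) - A i - 1\<bar> \<le> int (c i))
     \<and> (\<forall>i<length X. 1 \<le> c i \<or> (nat (A i) < length Y \<and> X!i = Y!nat (A i)))"

lemma align_del: "good_align xs (y#ys) k A c \<Longrightarrow>
  good_align (x#xs) (y#ys) (k+1) (\<lambda>i. case i of 0 \<Rightarrow> 0 | Suc j \<Rightarrow> A j) (\<lambda>i. case i of 0 \<Rightarrow> 1 | Suc j \<Rightarrow> c j)"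
  unfolding good_align_def
proof (elim conjE, intro conjI allI impI)
  fix i assume "\<forall>i. 0 \<le> A i" then show "0 \<le> (case i of 0 \<Rightarrow> 0 | Suc j \<Rightarrow> A j)" by (cases i) auto
next
  assume "sum c {..<length xs} \<le> k"
  then show "sum (\<lambda>i. case i of 0 \<Rightarrow> 1 | Suc j \<Rightarrow> c j) {..<length (x # xs)} \<le> k + 1"
    by (simp add: sum.lessThan_Suc_shift del: sum.lessThan_Suc)
next
  fix i assume "A 0 = 0" "\<forall>i<length xs. \<bar>A (Suc i) - A i - 1\<bar> \<le> int (c i)" "i < length (x#xs)"
  then show "\<bar>(case Suc i of 0 \<Rightarrow> 0 | Suc j \<Rightarrow> A j) - (case i of 0 \<Rightarrow> 0 | Suc j \<Rightarrow> A j) - 1\<bar>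
        \<le> int (case i of 0 \<Rightarrow> 1 | Suc j \<Rightarrow> c j)" by (cases i) auto
next
  fix i assume "\<forall>i<length xs. 1 \<le> c i \<or> nat (A i) < length (y # ys) \<and> xs ! i = (y # ys) ! nat (A i)" "i < length (x#xs)"
  then show "1 \<le> (case i of 0 \<Rightarrow> 1 | Suc j \<Rightarrow> c j) \<or>
         nat (case i of 0 \<Rightarrow> 0 | Suc j \<Rightarrow> A j) < length (y # ys) \<and>
         (x # xs) ! i = (y # ys) ! nat (case i of 0 \<Rightarrow> 0 | Suc j \<Rightarrow> A j)" by (cases i) auto
qed simp

lemma align_ins: "good_align (x#xs) ys k A c \<Longrightarrow>
  good_align (x#xs) (y#ys) (k+1) (\<lambda>i. if i = 0 then 0 else A i + 1) (c(0 := c 0 + 1))"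
  unfolding good_align_def
proof (elim conjE, intro conjI allI impI)
  fix i assume "\<forall>i. 0 \<le> A i" then show "0 \<le> (if i = 0 then 0 else A i + 1)" by simp
next
  assume "sum c {..<length (x#xs)} \<le> k"
  then show "sum (c(0 := c 0 + 1)) {..<length (x # xs)} \<le> k + 1"
    by (simp add: sum.lessThan_Suc_shift del: sum.lessThan_Suc)
next
  fix i assume "A 0 = 0" "\<forall>i<length (x#xs). \<bar>A (Suc i) - A i - 1\<bar> \<le> int (c i)" "i < length (x#xs)"
  then show "\<bar>(if Suc i = 0 then 0 else A (Suc i) + 1) - (if i = 0 then 0 else A i + 1) - 1\<bar>
        \<le> int ((c(0 := c 0 + 1)) i)" by (cases i) auto
next
  fix i assume "\<forall>i. 0 \<le> A i" "\<forall>i<length (x#xs). 1 \<le> c i \<or> nat (A i) < length ys \<and> (x#xs) ! i = ys ! nat (A i)" "i < length (x#xs)"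
  then show "1 \<le> (c(0 := c 0 + 1)) i \<or>
         nat (if i = 0 then 0 else A i + 1) < length (y # ys) \<and>
         (x # xs) ! i = (y # ys) ! nat (if i = 0 then 0 else A i + 1)"
    by (cases i) (auto simp: nat_add_distrib)
qed simp

lemma align_match: "good_align xs ys k A c \<Longrightarrow>
  good_align (x#xs) (y#ys) (k + (if x = y then 0 else 1)) (\<lambda>i. case i of 0 \<Rightarrow> 0 | Suc j \<Rightarrow> A j + 1)
     (\<lambda>i. case i of 0 \<Rightarrow> (if x = y then 0 else 1) | Suc j \<Rightarrow> c j)"
  unfolding good_align_def
proof (elim conjE, intro conjI allI impI)
  fix i assume "\<forall>i. 0 \<le> A i" then show "0 \<le> (case i of 0 \<Rightarrow> 0 | Suc j \<Rightarrow> A j + 1)"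
    by (cases i) (auto intro: add_nonneg_nonneg)
next
  assume "sum c {..<length xs} \<le> k"
  then show "sum (\<lambda>i. case i of 0 \<Rightarrow> (if x = y then 0 else 1) | Suc j \<Rightarrow> c j) {..<length (x # xs)} \<le> k + (if x = y then 0 else 1)"
    by (simp add: sum.lessThan_Suc_shift del: sum.lessThan_Suc)
next
  fix i assume "A 0 = 0" "\<forall>i<length xs. \<bar>A (Suc i) - A i - 1\<bar> \<le> int (c i)" "i < length (x#xs)"
  then show "\<bar>(case Suc i of 0 \<Rightarrow> 0 | Suc j \<Rightarrow> A j + 1) - (case i of 0 \<Rightarrow> 0 | Suc j \<Rightarrow> A j + 1) - 1\<bar>
        \<le> int (case i of 0 \<Rightarrow> (if x = y then 0 else 1) | Suc j \<Rightarrow> c j)" by (cases i) auto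
next
  fix i assume "\<forall>i. 0 \<le> A i" "\<forall>i<length xs. 1 \<le> c i \<or> nat (A i) < length ys \<and> xs ! i = ys ! nat (A i)" "i < length (x#xs)"
  then show "1 \<le> (case i of 0 \<Rightarrow> (if x = y then 0 else 1) | Suc j \<Rightarrow> c j) \<or>
         nat (case i of 0 \<Rightarrow> 0 | Suc j \<Rightarrow> A j + 1) < length (y # ys) \<and>
         (x # xs) ! i = (y # ys) ! nat (case i of 0 \<Rightarrow> 0 | Suc j \<Rightarrow> A j + 1)"
    by (cases i) (auto simp: nat_add_distrib)
qed simp

lemma align_exists: "\<exists>A c. good_align X Y (ED X Y) A c"
proof (induction X Y rule: ED.induct)
  case (1 ys)
  show ?case by (rule exI[of _ "\<lambda>_. 0"], rule exI[of _ "\<lambda>_. 0"]) (simp add: good_align_def)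
next
  case (2 v va)
  show ?case by (rule exI[of _ "\<lambda>_. 0"], rule exI[of _ "\<lambda>_. 1"]) (simp add: good_align_def)
next
  case (3 x xs y ys)
  from 3(1) obtain A1 c1 where a1: "good_align xs (y#ys) (ED xs (y#ys)) A1 c1" by blast
  from 3(2) obtain A2 c2 where a2: "good_align (x#xs) ys (ED (x#xs) ys) A2 c2" by blast
  from 3(3) obtain A3 c3 where a3: "good_align xs ys (ED xs ys) A3 c3" by blast
  have e: "ED (x#xs) (y#ys) = ED xs (y#ys) + 1 \<or> ED (x#xs) (y#ys) = ED (x#xs) ys + 1
      \<or> ED (x#xs) (y#ys) = ED xs ys + (if x = y then 0 else 1)"
    by (simp add: min_def)
  then show ?case
  proof (elim disjE)
    assume h: "ED (x#xs) (y#ys) = ED xs (y#ys) + 1"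
    show ?thesis unfolding h using align_del[OF a1, of x] by blast
  next
    assume h: "ED (x#xs) (y#ys) = ED (x#xs) ys + 1"
    show ?thesis unfolding h using align_ins[OF a2, of y] by blast
  next
    assume h: "ED (x#xs) (y#ys) = ED xs ys + (if x = y then 0 else 1)"
    show ?thesis unfolding h using align_match[OF a3, of x y] by blast
  qed
qed

lemma tele:
  assumes "\<forall>i<n. \<bar>A (Suc i) - A i - 1\<bar> \<le> int (c i)"
  shows "q \<le> p \<Longrightarrow> p \<le> n \<Longrightarrow> \<bar>(A p - int p) - (A q - int q)\<bar> \<le> int (sum c {q..<p})"
proof (induction p rule: dec_induct)
  case (step p)
  then have "\<bar>A (Suc p) - A p - 1\<bar> \<le> int (c p)" using assms by simp
  moreover have "\<bar>(A p - int p) - (A q - int q)\<bar> \<le> int (sum c {q..<p})" using step by simp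
  ultimately show ?case using step by simp
qed simp

lemma fold_max_ge: "x \<in> set xs \<Longrightarrow> x \<le> fold max xs (a::nat)" "a \<le> fold max xs (a::nat)"
proof (induction xs arbitrary: a)
  case (Cons y xs)
  { case 1 then show ?case using Cons.IH[of "max y a"] by (auto intro: order_trans[OF max.cobounded1]) }
  { case 2 then show ?case using Cons.IH(2)[of "max y a"] by simp }
qed simp_all

lemma TD_upper:
  fixes X Y :: "'a list" and A :: "nat \<Rightarrow> int" and c :: "nat \<Rightarrow> nat"
  assumes lenX: "length X = n"
    and stp: "\<forall>i<n. 1 \<le> c i \<or> (nat (A i) < length Y \<and> X!i = Y!nat (A i))"
    and pos: "\<forall>i. 0 \<le> A i"
    and tel: "\<forall>q p. q \<le> p \<longrightarrow> p \<le> n \<longrightarrow> \<bar>(A p - int p) - (A q - int q)\<bar> \<le> int (sum c {q..<p})"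
    and Lb: "\<forall>p\<le>n. \<bar>A p - int p\<bar> \<le> L"
  shows "degree_le l t \<Longrightarrow> i + nleaves t \<le> n \<Longrightarrow>
    TD_node L X Y t (int i) (A i - int i) \<le> (1 + 2*(l-1)*height t) * sum c {i..<i + nleaves t}"
proof (induction t arbitrary: i)
  case Leaf
  then have i: "i < n" by simp
  have sx: "substr X (int i) (int i + 1) = [X!i]" using i lenX by (simp add: substr_one)
  have sy: "substr Y (A i) (A i + 1) = (if nat (A i) < length Y then [Y ! nat (A i)] else [])"
    using pos by (simp add: substr_one)
  have "TD_node L X Y Leaf (int i) (A i - int i) = ED [X!i] (if nat (A i) < length Y then [Y ! nat (A i)] else [])"
    using sx sy by (simp add: add_ac)
  also have "\<dots> \<le> c i" using stp i by auto
  finally show ?case by simp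
next
  case (Node ts)
  define C where "C = (\<lambda>p q. sum c {p..<q})"
  define \<sigma> where "\<sigma> = (\<lambda>p. A p - int p)"
  define H where "H = fold max (map height ts) 0"
  define a where "a = 1 + 2*(l-1)*H"
  have hN: "height (Node ts) = 1 + H" by (simp add: H_def)
  have deg: "\<forall>t\<in>set ts. degree_le l t" and lts: "length ts \<le> l" using Node.prems(1) by auto
  have hts: "\<forall>t\<in>set ts. height t \<le> H" unfolding H_def using fold_max_ge(1) by fastforce
  have Csplit: "\<And>p q r. p \<le> q \<Longrightarrow> q \<le> r \<Longrightarrow> C p q + C q r = C p r"
    unfolding C_def by (simp add: sum.atLeastLessThan_concat)
  have Cmono: "\<And>p q r. q \<le> r \<Longrightarrow> C p q \<le> C p r"
    unfolding C_def by (rule sum_mono2) auto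
  have mn: "\<And>t i s. i \<le> n \<Longrightarrow> (MIN s'\<in>{-L..L}. TD_node L X Y t (int i) s' + 2 * nat \<bar>s - s'\<bar>)
      \<le> TD_node L X Y t (int i) (\<sigma> i) + 2 * nat \<bar>s - \<sigma> i\<bar>"
  proof -
    fix t i s assume "i \<le> n"
    then have "\<sigma> i \<in> {-L..L}" using Lb by (auto simp: \<sigma>_def abs_le_iff)
    then show "(MIN s'\<in>{-L..L}. TD_node L X Y t (int i) s' + 2 * nat \<bar>s - s'\<bar>)
      \<le> TD_node L X Y t (int i) (\<sigma> i) + 2 * nat \<bar>s - \<sigma> i\<bar>"
      by (intro Min_le) auto
  qed
  have IHt: "\<And>t i. t \<in> set ts \<Longrightarrow> i + nleaves t \<le> n \<Longrightarrow> TD_node L X Y t (int i) (\<sigma> i) \<le> a * C i (i + nleaves t)"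
  proof -
    fix t i assume t: "t \<in> set ts" and b: "i + nleaves t \<le> n"
    have "TD_node L X Y t (int i) (\<sigma> i) \<le> (1 + 2*(l-1)*height t) * C i (i + nleaves t)"
      using Node.IH[OF t _ b] deg t by (simp add: \<sigma>_def C_def)
    also have "\<dots> \<le> a * C i (i + nleaves t)" unfolding a_def using hts t by (intro mult_right_mono) auto
    finally show "TD_node L X Y t (int i) (\<sigma> i) \<le> a * C i (i + nleaves t)" .
  qed
  have LL: "\<And>us i. set us \<subseteq> set ts \<Longrightarrow> i0 \<le> i \<Longrightarrow> i + sum_list (map nleaves us) \<le> n \<Longrightarrow>
     TD_list L X Y us (int i) (\<sigma> i0) \<le> a * C i (i + sum_list (map nleaves us)) + 2 * length us * C i0 (i + sum_list (map nleaves us))" for i0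
  proof -
    fix us i show "set us \<subseteq> set ts \<Longrightarrow> i0 \<le> i \<Longrightarrow> i + sum_list (map nleaves us) \<le> n \<Longrightarrow>
     TD_list L X Y us (int i) (\<sigma> i0) \<le> a * C i (i + sum_list (map nleaves us)) + 2 * length us * C i0 (i + sum_list (map nleaves us))"
    proof (induction us arbitrary: i)
      case Nil then show ?case by simp
    next
      case (Cons t us)
      define m where "m = nleaves t"
      define M where "M = sum_list (map nleaves us)"
      have t: "t \<in> set ts" using Cons.prems by simp
      have b: "i + m + M \<le> n" using Cons.prems by (simp add: m_def M_def add_ac)
      have e: "TD_list L X Y (t # us) (int i) (\<sigma> i0) =
         (MIN s'\<in>{-L..L}. TD_node L X Y t (int i) s' + 2 * nat \<bar>\<sigma> i0 - s'\<bar>) + TD_list L X Y us (int (i + m)) (\<sigma> i0)"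
        by (simp add: Let_def m_def)
      have d: "nat \<bar>\<sigma> i0 - \<sigma> i\<bar> \<le> C i0 i"
        using tel Cons.prems(2) b unfolding \<sigma>_def C_def
        by (metis (no_types, lifting) abs_minus_commute le_add1 nat_le_iff order_trans)
      have f1: "(MIN s'\<in>{-L..L}. TD_node L X Y t (int i) s' + 2 * nat \<bar>\<sigma> i0 - s'\<bar>) \<le> a * C i (i + m) + 2 * C i0 i"
        using mn[of i t "\<sigma> i0"] IHt[OF t, of i] b d by (simp add: m_def)
      have f2: "TD_list L X Y us (int (i + m)) (\<sigma> i0) \<le> a * C (i + m) (i + m + M) + 2 * length us * C i0 (i + m + M)"
        using Cons.IH[of "i+m"] Cons.prems b by (simp add: M_def)
      have s1: "C i (i + m) + C (i+m) (i+m+M) = C i (i+m+M)" by (rule Csplit) auto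
      have s2: "C i0 i \<le> C i0 (i+m+M)" by (rule Cmono) simp
      have "TD_list L X Y (t # us) (int i) (\<sigma> i0) \<le> a * C i (i + m) + 2 * C i0 i + (a * C (i + m) (i + m + M) + 2 * length us * C i0 (i + m + M))"
        unfolding e using f1 f2 by (rule add_mono)
      also have "\<dots> = a * (C i (i + m) + C (i+m) (i+m+M)) + 2 * C i0 i + 2 * length us * C i0 (i + m + M)"
        by (simp add: algebra_simps)
      also have "\<dots> \<le> a * C i (i+m+M) + 2 * C i0 (i+m+M) + 2 * length us * C i0 (i + m + M)"
        unfolding s1 using s2 by simp
      also have "\<dots> = a * C i (i+m+M) + 2 * length (t#us) * C i0 (i + m + M)"
        by (simp add: algebra_simps)
      finally show ?case by (simp add: m_def M_def add_ac)
    qed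
  qed
  show ?case
  proof (cases ts)
    case Nil then show ?thesis by simp
  next
    case (Cons t us)
    define m where "m = nleaves t"
    define M where "M = sum_list (map nleaves us)"
    have t: "t \<in> set ts" using Cons by simp
    have b: "i + m + M \<le> n" using Node.prems Cons by (simp add: m_def M_def add_ac)
    have e: "TD_node L X Y (Node ts) (int i) (\<sigma> i) =
         (MIN s'\<in>{-L..L}. TD_node L X Y t (int i) s' + 2 * nat \<bar>\<sigma> i - s'\<bar>) + TD_list L X Y us (int (i + m)) (\<sigma> i)"
      by (simp add: Let_def m_def Cons)
    have f1: "(MIN s'\<in>{-L..L}. TD_node L X Y t (int i) s' + 2 * nat \<bar>\<sigma> i - s'\<bar>) \<le> a * C i (i + m)"
      using mn[of i t "\<sigma> i"] IHt[OF t, of i] b by (simp add: m_def)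
    have f2: "TD_list L X Y us (int (i + m)) (\<sigma> i) \<le> a * C (i + m) (i + m + M) + 2 * length us * C i (i + m + M)"
      using LL[of us i "i+m"] Cons b by (auto simp: M_def)
    have s1: "C i (i + m) + C (i+m) (i+m+M) = C i (i+m+M)" by (rule Csplit) auto
    have lu: "length us \<le> l - 1" using lts Cons by simp
    have "TD_node L X Y (Node ts) (int i) (\<sigma> i) \<le> a * C i (i + m) + (a * C (i + m) (i + m + M) + 2 * length us * C i (i + m + M))"
      unfolding e using f1 f2 by (rule add_mono)
    also have "\<dots> = a * C i (i+m+M) + 2 * length us * C i (i + m + M)"
      using s1 by (metis add.assoc add_mult_distrib2)
    also have "\<dots> \<le> a * C i (i+m+M) + 2 * (l - 1) * C i (i + m + M)"
      using lu by (simp add: mult_right_mono)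
    also have "\<dots> = (1 + 2*(l-1)*height (Node ts)) * C i (i+m+M)"
    proof -
      have gen: "(1 + 2*k*(1+H)) * x = (1+2*k*H)*x + 2*k*x" for k x :: nat by (simp add: algebra_simps)
      show ?thesis unfolding hN a_def gen[of "l-1"] ..
    qed
    finally show ?thesis by (simp add: \<sigma>_def C_def m_def M_def Cons add_ac)
  qed
qed

theorem lemma4p3:
  fixes X Y :: "'a list" and T :: ptree and n l h :: nat and L :: int
  assumes "length X = n" and "length Y = n"
    and "partition_tree n T"
    and "1 \<le> l" and "degree_le l T"
    and "height T \<le> h"
    and "0 \<le> L"
  shows "ED X Y \<le> TD L T X Y \<and>
         (int (ED X Y) \<le> L \<longrightarrow>
          int (TD L T X Y) \<le> (2 * (int l - 1) * int h + 1) * int (ED X Y))"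
proof
  have nT: "nleaves T = n" using assms(3) by (simp add: partition_tree_def)
  show "ED X Y \<le> TD L T X Y"
    using TD_lower(1)[OF assms(7), of X 0 T Y] assms(1,2) nT substr_full[of X] substr_full[of Y]
    by (metis TD_def add_0 add_0_right)
  show "int (ED X Y) \<le> L \<longrightarrow> int (TD L T X Y) \<le> (2 * (int l - 1) * int h + 1) * int (ED X Y)"
  proof
    assume EL: "int (ED X Y) \<le> L"
    obtain A c where g: "good_align X Y (ED X Y) A c" using align_exists by blast
    have A0: "A 0 = 0" and pos: "\<forall>i. 0 \<le> A i" and sc: "sum c {..<n} \<le> ED X Y"
      and st: "\<forall>i<n. \<bar>A (Suc i) - A i - 1\<bar> \<le> int (c i)"
      and stp: "\<forall>i<n. 1 \<le> c i \<or> (nat (A i) < length Y \<and> X!i = Y!nat (A i))"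
      using g assms(1) unfolding good_align_def by auto
    have tel: "\<forall>q p. q \<le> p \<longrightarrow> p \<le> n \<longrightarrow> \<bar>(A p - int p) - (A q - int q)\<bar> \<le> int (sum c {q..<p})"
      using tele[OF st] by blast
    have Lb: "\<forall>p\<le>n. \<bar>A p - int p\<bar> \<le> L"
    proof (intro allI impI)
      fix p assume p: "p \<le> n"
      have "\<bar>A p - int p\<bar> \<le> int (sum c {0..<p})" using tel p A0 by fastforce
      also have "sum c {0..<p} \<le> sum c {..<n}" using p by (intro sum_mono2) auto
      finally show "\<bar>A p - int p\<bar> \<le> L" using sc EL by linarith
    qed
    have "TD_node L X Y T (int 0) (A 0 - int 0) \<le> (1 + 2*(l-1)*height T) * sum c {0..<0 + nleaves T}"
      using TD_upper[OF assms(1) stp pos tel Lb, of l T 0] assms(5) nT by simp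
    then have "TD L T X Y \<le> (1 + 2*(l-1)*height T) * sum c {..<n}"
      using A0 nT by (simp add: TD_def atLeast0LessThan)
    also have "\<dots> \<le> (1 + 2*(l-1)*h) * ED X Y"
      using sc assms(6) by (intro mult_mono) auto
    finally have "int (TD L T X Y) \<le> int ((1 + 2*(l-1)*h) * ED X Y)" by (simp only: of_nat_le_iff)
    also have "\<dots> = (2 * (int l - 1) * int h + 1) * int (ED X Y)"
    proof -
      have li: "int (l-1) = int l - 1" using assms(4) by simp
      show ?thesis by (simp only: of_nat_mult of_nat_add li of_nat_1 of_nat_numeral) (simp add: algebra_simps)
    qed
    finally show "int (TD L T X Y) \<le> (2 * (int l - 1) * int h + 1) * int (ED X Y)" .
  qed
qed

end
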